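(* Let $\mathfrak{s}_1=\langle e_1,e_2,e_3,e_4\rangle$ be the real Lie algebra with only nonzero brackets $[e_2,e_4]=-e_1$, $[e_3,e_4]=-e_3$. Write $r=x_1e_{12}+x_2e_{13}+x_3e_{14}+x_4e_{23}+x_5e_{24}+x_6e_{34}\in\Lambda^2\mathfrak{s}_1$, $e_{ij}=e_i\wedge e_j$. Then $(\Lambda^3\mathfrak{s}_1)^{\mathfrak{s}_1}=0$, $(\Lambda^2\mathfrak{s}_1)^{\mathfrak{s}_1}=\langle e_{12}\rangle$, and the set $\mathcal{Y}_{\mathfrak{s}_1}$ of $r$-matrices equals the set of solutions of the classical Yang–Baxter equation, given by $x_5=0$, $x_3x_4=0$, $x_3x_6=0$. The orbits of $\mathrm{Aut}(\mathfrak{s}_1)$ (acting by $r\mapsto\Lambda^2T(r)$) on $\mathcal{Y}_{\mathfrak{s}_1}$ are $\{0\}$ and the following sets (all unlisted coordinates being $0$): $\mathrm{I}_\pm:\ x_1\in\mathbb{R}_\pm$; $\mathrm{II}:\ x_2\neq0$; $\mathrm{III}_\pm:\ x_1\in\mathbb{R}_\pm,\ x_2\neq0$; $\mathrm{IV}:\ x_2\in\mathbb{R},\ x_4\neq0$; $\mathrm{V}_\pm:\ x_1\in\mathbb{R}_\pm,\ x_2\in\mathbb{R},\ x_4\neq0$; $\mathrm{VI}:\ x_1,x_2\in\mathbb{R},\ x_3\neq0$; $\mathrm{VII}:\ x_2,x_4\in\mathbb{R},\ x_6\neq0$; $\mathrm{VIII}_\pm:\ x_1\in\mathbb{R}_\pm,\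 x_2,x_4\in\mathbb{R},\ x_6\neq0$. Consequently, up to Lie algebra automorphisms of $\mathfrak{s}_1$ there are exactly five classes of coboundary cocommutators $\delta_r$, $r\in\mathcal{Y}_{\mathfrak{s}_1}$, corresponding to $r$ in $\{0\}\cup\mathrm{I}_+\cup\mathrm{I}_-$ (the zero cocommutator), $\mathrm{II}\cup\mathrm{III}_\pm$, $\mathrm{IV}\cup\mathrm{V}_\pm$, $\mathrm{VI}$, and $\mathrm{VII}\cup\mathrm{VIII}_\pm$, represented respectively by $r=0,\ e_{13},\ e_{23},\ e_{14},\ e_{34}$.
   Context: $[\cdot,\cdot]$ is the algebraic Schouten bracket on $\Lambda\mathfrak{s}_1$; $(\Lambda^m\mathfrak{g})^{\mathfrak{g}}=\{w:[v,w]=0\ \forall v\in\mathfrak{g}\}$. An $r$-matrix is $r\in\Lambda^2\mathfrak{g}$ with $[r,r]\in(\Lambda^3\mathfrak{g})^{\mathfrak{g}}$ (mCYBE); the CYBE is $[r,r]=0$. $\delta_r(v)=[v,r]$; cocommutators $\delta_1,\delta_2$ are equivalent if $\delta_2=\Lambda^2T\circ\delta_1\circ T^{-1}$ for some Lie algebra automorphism $T$. $\mathbb{R}_+$, $\mathbb{R}_-$ denote positive and negative reals. *)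

theory Defs
  imports Complex_Main
begin

text \<open>Vectors are coordinate functions on the index type idx; elements of
  Lambda^2 (resp. Lambda^3) are totally antisymmetric 2- (resp. 3-) tensors,
  e_i wedge e_j being the tensor e_i (x) e_j - e_j (x) e_i.\<close>

datatype idx = I1 | I2 | I3 | I4

lemma UNIV_idx: "(UNIV :: idx set) = {I1, I2, I3, I4}"
  using idx.exhaust by auto

instance idx :: finite
  by standard (simp add: UNIV_idx)

type_synonym vec = "idx \<Rightarrow> real"
type_synonym ten2 = "idx \<Rightarrow> idx \<Rightarrow> real"
type_synonym ten3 = "idx \<Rightarrow> idx \<Rightarrow> idx \<Rightarrow> real"

definition ebas :: "idx \<Rightarrow> vec" where
  "ebas i = (\<lambda>j. if j = i then 1 else 0)"

definition sc :: "idx \<Rightarrow> idx \<Rightarrow> idx \<Rightarrow> real" where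
  "sc p q k =
     (if (p, q, k) = (I2, I4, I1) then -1
      else if (p, q, k) = (I4, I2, I1) then 1
      else if (p, q, k) = (I3, I4, I3) then -1
      else if (p, q, k) = (I4, I3, I3) then 1
      else 0)"

definition br :: "vec \<Rightarrow> vec \<Rightarrow> vec" where
  "br u v = (\<lambda>k. \<Sum>p\<in>UNIV. \<Sum>q\<in>UNIV. sc p q k * u p * v q)"

definition wedge2 :: "vec \<Rightarrow> vec \<Rightarrow> ten2" where
  "wedge2 u v = (\<lambda>i j. u i * v j - u j * v i)"

definition wedge3 :: "vec \<Rightarrow> vec \<Rightarrow> vec \<Rightarrow> ten3" where
  "wedge3 u v w = (\<lambda>i j k.
      u i * v j * w k + u j * v k * w i + u k * v i * w j
    - u j * v i * w k - u i * v k * w j - u k * v j * w i)"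

definition alt2 :: "ten2 \<Rightarrow> bool" where
  "alt2 a \<longleftrightarrow> (\<forall>i j. a i j = - a j i)"

definition alt3 :: "ten3 \<Rightarrow> bool" where
  "alt3 t \<longleftrightarrow> (\<forall>i j k. t i j k = - t j i k \<and> t i j k = - t i k j)"

text \<open>Schouten bracket [v, w] of v in g with w in Lambda^2 g, Lambda^3 g
  (derivation extension of ad_v).\<close>
definition act2 :: "vec \<Rightarrow> ten2 \<Rightarrow> ten2" where
  "act2 v a = (\<lambda>i j. (\<Sum>q\<in>UNIV. br v (ebas q) i * a q j)
                    + (\<Sum>q\<in>UNIV. br v (ebas q) j * a i q))"

definition act3 :: "vec \<Rightarrow> ten3 \<Rightarrow> ten3" where
  "act3 v t = (\<lambda>i j k. (\<Sum>q\<in>UNIV. br v (ebas q) i * t q j k)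
                      + (\<Sum>q\<in>UNIV. br v (ebas q) j * t i q k)
                      + (\<Sum>q\<in>UNIV. br v (ebas q) k * t i j q))"

definition inv2 :: "ten2 set" where
  "inv2 = {a. alt2 a \<and> (\<forall>v. act2 v a = (\<lambda>i j. 0))}"

definition inv3 :: "ten3 set" where
  "inv3 = {t. alt3 t \<and> (\<forall>v. act3 v t = (\<lambda>i j k. 0))}"

text \<open>Algebraic Schouten bracket on decomposables:
  [X^Y, Z^W] = [X,Z]^Y^W - [X,W]^Y^Z - [Y,Z]^X^W + [Y,W]^X^Z,
  extended bilinearly (r = 1/2 sum_{a,b} r_ab e_a ^ e_b).\<close>
definition schouten_dec :: "vec \<Rightarrow> vec \<Rightarrow> vec \<Rightarrow> vec \<Rightarrow> ten3" where
  "schouten_dec X Y Z W = (\<lambda>i j k.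
      wedge3 (br X Z) Y W i j k - wedge3 (br X W) Y Z i j k
    - wedge3 (br Y Z) X W i j k + wedge3 (br Y W) X Z i j k)"

definition schouten2 :: "ten2 \<Rightarrow> ten2 \<Rightarrow> ten3" where
  "schouten2 r s = (\<lambda>i j k. (1/4) *
     (\<Sum>a\<in>UNIV. \<Sum>b\<in>UNIV. \<Sum>c\<in>UNIV. \<Sum>d\<in>UNIV.
        r a b * s c d * schouten_dec (ebas a) (ebas b) (ebas c) (ebas d) i j k))"

definition rm :: "real \<Rightarrow> real \<Rightarrow> real \<Rightarrow> real \<Rightarrow> real \<Rightarrow> real \<Rightarrow> ten2" where
  "rm x1 x2 x3 x4 x5 x6 = (\<lambda>i j.
      x1 * wedge2 (ebas I1) (ebas I2) i j + x2 * wedge2 (ebas I1) (ebas I3) i j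
    + x3 * wedge2 (ebas I1) (ebas I4) i j + x4 * wedge2 (ebas I2) (ebas I3) i j
    + x5 * wedge2 (ebas I2) (ebas I4) i j + x6 * wedge2 (ebas I3) (ebas I4) i j)"

definition Ymat :: "ten2 set" where
  "Ymat = {r. alt2 r \<and> schouten2 r r \<in> inv3}"

definition CYBE_sols :: "ten2 set" where
  "CYBE_sols = {r. alt2 r \<and> schouten2 r r = (\<lambda>i j k. 0)}"

definition lin :: "(vec \<Rightarrow> vec) \<Rightarrow> bool" where
  "lin T \<longleftrightarrow> (\<forall>u v a b. T (\<lambda>i. a * u i + b * v i) = (\<lambda>i. a * T u i + b * T v i))"

definition Aut :: "(vec \<Rightarrow> vec) set" where
  "Aut = {T. lin T \<and> bij T \<and> (\<forall>u v. T (br u v) = br (T u) (T v))}"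

definition L2 :: "(vec \<Rightarrow> vec) \<Rightarrow> ten2 \<Rightarrow> ten2" where
  "L2 T r = (\<lambda>p q. \<Sum>i\<in>UNIV. \<Sum>j\<in>UNIV. r i j * T (ebas i) p * T (ebas j) q)"

definition orbit :: "ten2 \<Rightarrow> ten2 set" where
  "orbit r = {L2 T r | T. T \<in> Aut}"

definition delta :: "ten2 \<Rightarrow> vec \<Rightarrow> ten2" where
  "delta r = (\<lambda>v. act2 v r)"

definition cequiv :: "(vec \<Rightarrow> ten2) \<Rightarrow> (vec \<Rightarrow> ten2) \<Rightarrow> bool" where
  "cequiv d1 d2 \<longleftrightarrow> (\<exists>T\<in>Aut. d2 = (\<lambda>v. L2 T (d1 (inv T v))))"

text \<open>The orbit families; s = 1 gives the "+" family, s = -1 the "-" family.\<close>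
definition orbI :: "real \<Rightarrow> ten2 set" where
  "orbI s = {rm x1 0 0 0 0 0 | x1. s * x1 > 0}"
definition orbII :: "ten2 set" where
  "orbII = {rm 0 x2 0 0 0 0 | x2. x2 \<noteq> 0}"
definition orbIII :: "real \<Rightarrow> ten2 set" where
  "orbIII s = {rm x1 x2 0 0 0 0 | x1 x2. s * x1 > 0 \<and> x2 \<noteq> 0}"
definition orbIV :: "ten2 set" where
  "orbIV = {rm 0 x2 0 x4 0 0 | x2 x4. x4 \<noteq> 0}"
definition orbV :: "real \<Rightarrow> ten2 set" where
  "orbV s = {rm x1 x2 0 x4 0 0 | x1 x2 x4. s * x1 > 0 \<and> x4 \<noteq> 0}"
definition orbVI :: "ten2 set" where
  "orbVI = {rm x1 x2 x3 0 0 0 | x1 x2 x3. x3 \<noteq> 0}"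
definition orbVII :: "ten2 set" where
  "orbVII = {rm 0 x2 0 x4 0 x6 | x2 x4 x6. x6 \<noteq> 0}"
definition orbVIII :: "real \<Rightarrow> ten2 set" where
  "orbVIII s = {rm x1 x2 0 x4 0 x6 | x1 x2 x4 x6. s * x1 > 0 \<and> x6 \<noteq> 0}"

end

theory Submission
  imports Defs
begin

lemma sum_idx: "(\<Sum>i\<in>UNIV. f i) = f I1 + f I2 + f I3 + f I4"
  by (simp add: UNIV_idx add.assoc)
lemma br_ebas: "br (ebas p) (ebas q) = sc p q"
  unfolding br_def ebas_def by (simp add: sum_idx; cases p; cases q; simp)

definition mk4 :: "real \<Rightarrow> real \<Rightarrow> real \<Rightarrow> real \<Rightarrow> vec" where
  "mk4 p q r s = (\<lambda>i. case i of I1 \<Rightarrow> p | I2 \<Rightarrow> q | I3 \<Rightarrow> r | I4 \<Rightarrow> s)"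

lemma mk4_simps[simp]: "mk4 p q r s I1 = p" "mk4 p q r s I2 = q" "mk4 p q r s I3 = r" "mk4 p q r s I4 = s"
  by (simp_all add: mk4_def)

lemma mk4_eq[simp]: "mk4 p q r s = mk4 p' q' r' s' \<longleftrightarrow> p = p' \<and> q = q' \<and> r = r' \<and> s = s'"
  by (metis mk4_simps(1) mk4_simps(2) mk4_simps(3) mk4_simps(4))

lemma vec_eq_mk4: "(v::vec) = mk4 (v I1) (v I2) (v I3) (v I4)"
  unfolding mk4_def by (auto split: idx.split)

lemma br_mk4: "br u v = mk4 (u I4 * v I2 - u I2 * v I4) 0 (u I4 * v I3 - u I3 * v I4) 0"
  unfolding br_def mk4_def by (auto simp: sum_idx sc_def split: idx.split)

lemma ebas_mk4: "ebas I1 = mk4 1 0 0 0" "ebas I2 = mk4 0 1 0 0" "ebas I3 = mk4 0 0 1 0" "ebas I4 = mk4 0 0 0 1"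
  unfolding mk4_def ebas_def by (auto split: idx.split)

lemma rm_vals: 
  "rm x1 x2 x3 x4 x5 x6 I1 I1 = 0" "rm x1 x2 x3 x4 x5 x6 I1 I2 = x1" "rm x1 x2 x3 x4 x5 x6 I1 I3 = x2" "rm x1 x2 x3 x4 x5 x6 I1 I4 = x3"
  "rm x1 x2 x3 x4 x5 x6 I2 I1 = -x1" "rm x1 x2 x3 x4 x5 x6 I2 I2 = 0" "rm x1 x2 x3 x4 x5 x6 I2 I3 = x4" "rm x1 x2 x3 x4 x5 x6 I2 I4 = x5"
  "rm x1 x2 x3 x4 x5 x6 I3 I1 = -x2" "rm x1 x2 x3 x4 x5 x6 I3 I2 = -x4" "rm x1 x2 x3 x4 x5 x6 I3 I3 = 0" "rm x1 x2 x3 x4 x5 x6 I3 I4 = x6"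
  "rm x1 x2 x3 x4 x5 x6 I4 I1 = -x3" "rm x1 x2 x3 x4 x5 x6 I4 I2 = -x5" "rm x1 x2 x3 x4 x5 x6 I4 I3 = -x6" "rm x1 x2 x3 x4 x5 x6 I4 I4 = 0"
  by (simp_all add: rm_def wedge2_def ebas_def)

lemma rm_inj[simp]: "rm x1 x2 x3 x4 x5 x6 = rm y1 y2 y3 y4 y5 y6 \<longleftrightarrow>
   x1 = y1 \<and> x2 = y2 \<and> x3 = y3 \<and> x4 = y4 \<and> x5 = y5 \<and> x6 = y6"
  apply (rule iffI)
  apply (intro conjI)
  apply (metis rm_vals(2))
  apply (metis rm_vals(3))
  apply (metis rm_vals(4))
  apply (metis rm_vals(7))
  apply (metis rm_vals(8))
  apply (metis rm_vals(12))
  by simp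

lemma rm_zero: "rm 0 0 0 0 0 0 = (\<lambda>i j. 0)"
  by (simp add: rm_def wedge2_def)

lemma alt2_rm: "alt2 (rm x1 x2 x3 x4 x5 x6)"
  unfolding alt2_def by (intro allI, case_tac i; case_tac j; simp add: rm_vals)

lemma alt2_eq_rm: assumes "alt2 r"
  shows "r = rm (r I1 I2) (r I1 I3) (r I1 I4) (r I2 I3) (r I2 I4) (r I3 I4)"
proof (rule ext, rule ext)
  fix i j
  have A: "\<And>i j. r i j = - r j i" using assms unfolding alt2_def by blast
  have "r i j = - r j i" by (rule A)
  then show "r i j = rm (r I1 I2) (r I1 I3) (r I1 I4) (r I2 I3) (r I2 I4) (r I3 I4) i j"
    by (cases i; cases j; simp only: rm_vals; linarith)
qed

lemma alt2_iff: "alt2 r \<longleftrightarrow> (\<exists>x1 x2 x3 x4 x5 x6. r = rm x1 x2 x3 x4 x5 x6)"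
  using alt2_eq_rm alt2_rm by blast

lemma delta_rm: "delta (rm y1 y2 y3 y4 y5 y6) v = rm (v I2 * y5) (v I4*y2 - v I3*y3 + v I4*y4 + v I2*y6)
   (v I4*y5) (v I4*y4 - v I3*y5) 0 (v I4*y6)"
  unfolding delta_def act2_def br_mk4
  by (rule ext, rule ext, case_tac i; case_tac j; simp add: sum_idx ebas_def rm_vals; simp add: algebra_simps)

definition Tm :: "real \<Rightarrow> real \<Rightarrow> real \<Rightarrow> real \<Rightarrow> real \<Rightarrow> real \<Rightarrow> vec \<Rightarrow> vec" where
  "Tm a b c d f g v = mk4 (a*v I1 + b*v I2 + d*v I4) (a*v I2 + f*v I4) (c*v I3 + g*v I4) (v I4)"

definition Ti :: "real \<Rightarrow> real \<Rightarrow> real \<Rightarrow> real \<Rightarrow> real \<Rightarrow> real \<Rightarrow> vec \<Rightarrow> vec" where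
  "Ti a b c d f g v = mk4 ((v I1 - b*((v I2 - f*v I4)/a) - d*v I4)/a) ((v I2 - f*v I4)/a)
      ((v I3 - g*v I4)/c) (v I4)"

lemma Tm_ebas: "Tm a b c d f g (ebas I1) = mk4 a 0 0 0" "Tm a b c d f g (ebas I2) = mk4 b a 0 0"
  "Tm a b c d f g (ebas I3) = mk4 0 0 c 0" "Tm a b c d f g (ebas I4) = mk4 d f g 1"
  by (simp_all add: Tm_def ebas_mk4)

lemma Tm_Ti: "a \<noteq> 0 \<Longrightarrow> c \<noteq> 0 \<Longrightarrow> Tm a b c d f g (Ti a b c d f g v) = v"
  unfolding Tm_def Ti_def mk4_def by (rule ext) (auto simp: field_simps split: idx.split)

lemma Ti_Tm: "a \<noteq> 0 \<Longrightarrow> c \<noteq> 0 \<Longrightarrow> Ti a b c d f g (Tm a b c d f g v) = v"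
  unfolding Tm_def Ti_def mk4_def by (rule ext) (auto simp: field_simps split: idx.split)

lemma inv_Tm: "a \<noteq> 0 \<Longrightarrow> c \<noteq> 0 \<Longrightarrow> inv (Tm a b c d f g) = Ti a b c d f g"
  by (rule inv_unique_comp) (auto simp: Tm_Ti Ti_Tm)

lemma Tm_Aut: assumes "a \<noteq> 0" "c \<noteq> 0" shows "Tm a b c d f g \<in> Aut"
proof -
  have "lin (Tm a b c d f g)" unfolding lin_def Tm_def mk4_def
    by (intro allI ext) (simp add: algebra_simps split: idx.split)
  moreover have "bij (Tm a b c d f g)"
    by (rule o_bij[of "Ti a b c d f g"]) (auto simp: Tm_Ti Ti_Tm assms)
  moreover have "\<forall>u v. Tm a b c d f g (br u v) = br (Tm a b c d f g u) (Tm a b c d f g v)"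
    by (simp add: Tm_def br_mk4 algebra_simps)
  ultimately show ?thesis by (simp add: Aut_def)
qed

lemma lin_expand: assumes "lin T"
  shows "T v = mk4 (\<Sum>i\<in>UNIV. v i * T (ebas i) I1) (\<Sum>i\<in>UNIV. v i * T (ebas i) I2)
                   (\<Sum>i\<in>UNIV. v i * T (ebas i) I3) (\<Sum>i\<in>UNIV. v i * T (ebas i) I4)"
proof -
  have L: "\<And>u w a b. T (\<lambda>i. a * u i + b * w i) = (\<lambda>i. a * T u i + b * T w i)"
    using assms unfolding lin_def by blast
  define w2 where "w2 = (\<lambda>i. v I3 * ebas I3 i + v I4 * ebas I4 i)"
  define w1 where "w1 = (\<lambda>i. v I2 * ebas I2 i + 1 * w2 i)"
  have v: "v = (\<lambda>i. v I1 * ebas I1 i + 1 * w1 i)"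
    unfolding w1_def w2_def by (rule ext, case_tac i, simp_all add: ebas_def)
  have "T v = (\<lambda>i. v I1 * T (ebas I1) i + 1 * T w1 i)" by (subst v, rule L)
  also have "T w1 = (\<lambda>i. v I2 * T (ebas I2) i + 1 * T w2 i)" unfolding w1_def by (rule L)
  also have "T w2 = (\<lambda>i. v I3 * T (ebas I3) i + v I4 * T (ebas I4) i)" unfolding w2_def by (rule L)
  finally have eq: "T v = (\<lambda>i. v I1 * T (ebas I1) i + 1 * (v I2 * T (ebas I2) i + 1 * (v I3 * T (ebas I3) i + v I4 * T (ebas I4) i)))" .
  show ?thesis unfolding mk4_def by (rule ext) (simp add: eq sum_idx add.assoc split: idx.split)
qed

lemma Aut_Tm: assumes "T \<in> Aut"
  shows "\<exists>a b c d f g. a \<noteq> 0 \<and> c \<noteq> 0 \<and> T = Tm a b c d f g"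
proof -
  have lin: "lin T" and bj: "bij T" and hom: "\<And>u v. T (br u v) = br (T u) (T v)"
    using assms by (auto simp: Aut_def)
  define m where "m = (\<lambda>i j. T (ebas j) i)"
  have TE: "T v = mk4 (\<Sum>j\<in>UNIV. v j * m I1 j) (\<Sum>j\<in>UNIV. v j * m I2 j)
                   (\<Sum>j\<in>UNIV. v j * m I3 j) (\<Sum>j\<in>UNIV. v j * m I4 j)" for v
    unfolding m_def by (rule lin_expand[OF lin])
  have TE': "T v = mk4 (v I1 * m I1 I1 + v I2 * m I1 I2 + v I3 * m I1 I3 + v I4 * m I1 I4)
                       (v I1 * m I2 I1 + v I2 * m I2 I2 + v I3 * m I2 I3 + v I4 * m I2 I4)
                       (v I1 * m I3 I1 + v I2 * m I3 I2 + v I3 * m I3 I3 + v I4 * m I3 I4)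
                       (v I1 * m I4 I1 + v I2 * m I4 I2 + v I3 * m I4 I3 + v I4 * m I4 I4)" for v
    by (subst TE) (simp add: sum_idx)
  have h: "T (br (ebas p) (ebas q)) = br (T (ebas p)) (T (ebas q))" for p q by (rule hom)
  note h24 = h[of I2 I4, unfolded br_mk4 TE' ebas_mk4, simplified]
  note h34 = h[of I3 I4, unfolded br_mk4 TE' ebas_mk4, simplified]
  note h23 = h[of I2 I3, unfolded br_mk4 TE' ebas_mk4, simplified]
  note h14 = h[of I1 I4, unfolded br_mk4 TE' ebas_mk4, simplified]
  have z3: "m I1 I3 = 0" "m I2 I3 = 0" "m I4 I3 = 0" using h34 by auto
  have z1: "m I2 I1 = 0" "m I4 I1 = 0" using h24 by auto
  have T0: "T (\<lambda>i. 0) = (\<lambda>i. 0)" by (subst TE') (simp add: mk4_def fun_eq_iff split: idx.split)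
  have inj: "inj T" using bj bij_def by blast
  have ne: "T (ebas i) \<noteq> (\<lambda>i. 0)" for i
  proof
    assume "T (ebas i) = (\<lambda>i. 0)"
    then have "T (ebas i) = T (\<lambda>i. 0)" using T0 by simp
    then have "ebas i = (\<lambda>i. 0)" by (rule injD[OF inj])
    then have "ebas i i = 0" by simp
    then show False by (simp add: ebas_def)
  qed
  have c0: "m I3 I3 \<noteq> 0"
  proof
    assume "m I3 I3 = 0"
    then have "T (ebas I3) = (\<lambda>i. 0)" by (subst TE') (simp add: ebas_mk4 z3 mk4_def fun_eq_iff split: idx.split)
    then show False using ne by blast
  qed
  have m44: "m I4 I4 = 1" using h34 c0 by auto
  have m31: "m I3 I1 = 0" using h14 m44 z1 by auto
  have h23': "m I4 I2 * m I3 I3 = 0" using h23 z3 by auto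
  then have m42: "m I4 I2 = 0" using c0 by simp
  have m32: "m I3 I2 = 0" using h24 z3 m44 m42 m31 by auto
  have m22: "m I2 I2 = m I1 I1" using h24 z3 m44 m42 by auto
  have a0: "m I1 I1 \<noteq> 0"
  proof
    assume "m I1 I1 = 0"
    then have "T (ebas I1) = (\<lambda>i. 0)" by (subst TE') (simp add: ebas_mk4 z1 m31 mk4_def fun_eq_iff split: idx.split)
    then show False using ne by blast
  qed
  have "T = Tm (m I1 I1) (m I1 I2) (m I3 I3) (m I1 I4) (m I2 I4) (m I3 I4)"
    by (rule ext, subst TE') (simp add: Tm_def z1 z3 m31 m44 m42 m32 m22)
  then show ?thesis using a0 c0 by blast
qed

lemma L2_Tm: "L2 (Tm a b c d f g) (rm x1 x2 x3 x4 x5 x6) =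
   rm (a*a*x1 + a*f*x3 + (b*f - a*d)*x5) (a*c*x2 + a*g*x3 + b*c*x4 + b*g*x5 - c*d*x6)
      (a*x3 + b*x5) (a*c*x4 + a*g*x5 - c*f*x6) (a*x5) (c*x6)"
  unfolding L2_def
  by (rule ext, rule ext, case_tac p; case_tac q; simp add: sum_idx rm_vals Tm_ebas; simp add: algebra_simps)

lemma orbit_Tm: "orbit r = {L2 (Tm a b c d f g) r | a b c d f g. a \<noteq> 0 \<and> c \<noteq> 0}"
  unfolding orbit_def using Aut_Tm Tm_Aut by blast

lemma orbit_rm: "orbit (rm x1 x2 x3 x4 x5 x6) = {rm (a*a*x1 + a*f*x3 + (b*f - a*d)*x5) (a*c*x2 + a*g*x3 + b*c*x4 + b*g*x5 - c*d*x6)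
      (a*x3 + b*x5) (a*c*x4 + a*g*x5 - c*f*x6) (a*x5) (c*x6) | a b c d f g. a \<noteq> 0 \<and> c \<noteq> 0}"
  by (simp only: orbit_Tm L2_Tm)

lemma ex_nonzero: "\<exists>a::real. a \<noteq> 0" by (rule exI[of _ 1]) simp

lemma orbI': "a \<noteq> 0 \<Longrightarrow> c \<noteq> 0 \<Longrightarrow> r = rm (a*a*x1 + a*f*x3 + (b*f - a*d)*x5) (a*c*x2 + a*g*x3 + b*c*x4 + b*g*x5 - c*d*x6)
      (a*x3 + b*x5) (a*c*x4 + a*g*x5 - c*f*x6) (a*x5) (c*x6) \<Longrightarrow> r \<in> orbit (rm x1 x2 x3 x4 x5 x6)"
  unfolding orbit_rm by blast

lemma orbE': "r \<in> orbit (rm x1 x2 x3 x4 x5 x6) \<Longrightarrow> (\<And>a b c d f g. a \<noteq> 0 \<Longrightarrow> c \<noteq> 0 \<Longrightarrow>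
   r = rm (a*a*x1 + a*f*x3 + (b*f - a*d)*x5) (a*c*x2 + a*g*x3 + b*c*x4 + b*g*x5 - c*d*x6)
      (a*x3 + b*x5) (a*c*x4 + a*g*x5 - c*f*x6) (a*x5) (c*x6) \<Longrightarrow> P) \<Longrightarrow> P"
  unfolding orbit_rm by blast

lemma sgn_pos: "s*x1 > 0 \<Longrightarrow> a \<noteq> 0 \<Longrightarrow> s*(a*a*x1) > (0::real)"
proof -
  assume "s*x1 > 0" "a \<noteq> 0"
  moreover have "a*a > 0" using \<open>a \<noteq> 0\<close> by (metis not_real_square_gt_zero)
  ultimately have "(a*a)*(s*x1) > 0" by (simp add: mult_pos_pos)
  then show ?thesis by (simp add: algebra_simps)
qed

lemma sqrt_pick: assumes "s*x1 > 0" "s*z1 > (0::real)"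
  shows "sqrt (z1/x1) \<noteq> 0" "sqrt (z1/x1) * sqrt (z1/x1) * x1 = z1"
proof -
  have "(s*z1)*(s*x1) > 0" using assms by simp
  then have "(s*s)*(z1*x1) > 0" by (simp add: algebra_simps)
  then have zx: "z1*x1 > 0" by (metis mult_pos_pos not_square_less_zero zero_less_mult_iff less_eq_real_def)
  then have q: "z1/x1 > 0" by (simp add: zero_less_divide_iff zero_less_mult_iff)
  then show "sqrt (z1/x1) \<noteq> 0" by (metis less_irrefl real_sqrt_eq_zero_cancel_iff)
  have "x1 \<noteq> 0" using zx by (metis mult_zero_right less_irrefl)
  moreover have "sqrt (z1/x1) * sqrt (z1/x1) = z1/x1" using q by (simp only: real_sqrt_mult_self abs_of_pos)
  ultimately show "sqrt (z1/x1) * sqrt (z1/x1) * x1 = z1" by simp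
qed

lemma O0: "orbit (rm 0 0 0 0 0 0) = {rm 0 0 0 0 0 0}"
  unfolding orbit_rm by (auto simp: ex_nonzero)

lemma OI: assumes "s*x1 > 0" shows "orbit (rm x1 0 0 0 0 0) = orbI s"
proof (intro set_eqI iffI)
  fix r assume "r \<in> orbit (rm x1 0 0 0 0 0)"
  then show "r \<in> orbI s" by (rule orbE') (auto simp: orbI_def sgn_pos assms)
next
  fix r assume "r \<in> orbI s"
  then obtain z1 where z: "r = rm z1 0 0 0 0 0" "s*z1 > 0" by (auto simp: orbI_def)
  show "r \<in> orbit (rm x1 0 0 0 0 0)"
    by (rule orbI'[where a="sqrt (z1/x1)" and c=1 and b=0 and d=0 and f=0 and g=0])
       (use sqrt_pick[OF assms z(2)] z in auto)
qed

lemma OII: assumes "x2 \<noteq> 0" shows "orbit (rm 0 x2 0 0 0 0) = orbII"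
proof (intro set_eqI iffI)
  fix r assume "r \<in> orbit (rm 0 x2 0 0 0 0)"
  then show "r \<in> orbII" by (rule orbE') (auto simp: orbII_def assms)
next
  fix r assume "r \<in> orbII"
  then obtain z2 where z: "r = rm 0 z2 0 0 0 0" "z2 \<noteq> 0" by (auto simp: orbII_def)
  show "r \<in> orbit (rm 0 x2 0 0 0 0)"
    by (rule orbI'[where a=1 and c="z2/x2" and b=0 and d=0 and f=0 and g=0])
       (use z assms in auto)
qed

lemma OIII: assumes "s*x1 > 0" "x2 \<noteq> 0" shows "orbit (rm x1 x2 0 0 0 0) = orbIII s"
proof (intro set_eqI iffI)
  fix r assume "r \<in> orbit (rm x1 x2 0 0 0 0)"
  then show "r \<in> orbIII s" by (rule orbE') (auto simp: orbIII_def sgn_pos assms)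
next
  fix r assume "r \<in> orbIII s"
  then obtain z1 z2 where z: "r = rm z1 z2 0 0 0 0" "s*z1 > 0" "z2 \<noteq> 0" by (auto simp: orbIII_def)
  define a where "a = sqrt (z1/x1)"
  have a: "a \<noteq> 0" "a*a*x1 = z1" using sqrt_pick[OF assms(1) z(2)] a_def by auto
  show "r \<in> orbit (rm x1 x2 0 0 0 0)"
    by (rule orbI'[where a=a and c="z2/(a*x2)" and b=0 and d=0 and f=0 and g=0])
       (use z assms a in auto)
qed

lemma OIV: assumes "x4 \<noteq> 0" shows "orbit (rm 0 x2 0 x4 0 0) = orbIV"
proof (intro set_eqI iffI)
  fix r assume "r \<in> orbit (rm 0 x2 0 x4 0 0)"
  then show "r \<in> orbIV" by (rule orbE') (auto simp: orbIV_def assms)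
next
  fix r assume "r \<in> orbIV"
  then obtain z2 z4 where z: "r = rm 0 z2 0 z4 0 0" "z4 \<noteq> 0" by (auto simp: orbIV_def)
  define c where "c = z4/x4"
  have c: "c \<noteq> 0" "c*x4 = z4" using z assms c_def by auto
  show "r \<in> orbit (rm 0 x2 0 x4 0 0)"
    by (rule orbI'[where a=1 and c=c and b="(z2 - c*x2)/(c*x4)" and d=0 and f=0 and g=0])
       (use z assms c in \<open>auto simp: field_simps\<close>)
qed

lemma OV: assumes "s*x1 > 0" "x4 \<noteq> 0" shows "orbit (rm x1 x2 0 x4 0 0) = orbV s"
proof (intro set_eqI iffI)
  fix r assume "r \<in> orbit (rm x1 x2 0 x4 0 0)"
  then show "r \<in> orbV s" by (rule orbE') (auto simp: orbV_def sgn_pos assms)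
next
  fix r assume "r \<in> orbV s"
  then obtain z1 z2 z4 where z: "r = rm z1 z2 0 z4 0 0" "s*z1 > 0" "z4 \<noteq> 0" by (auto simp: orbV_def)
  define a where "a = sqrt (z1/x1)"
  have a: "a \<noteq> 0" "a*a*x1 = z1" using sqrt_pick[OF assms(1) z(2)] a_def by auto
  define c where "c = z4/(a*x4)"
  have c: "c \<noteq> 0" "a*c*x4 = z4" using z assms c_def a by auto
  show "r \<in> orbit (rm x1 x2 0 x4 0 0)"
    by (rule orbI'[where a=a and c=c and b="(z2 - a*c*x2)/(c*x4)" and d=0 and f=0 and g=0])
       (use z assms a c in \<open>auto simp: field_simps\<close>)
qed

lemma OVI: assumes "x3 \<noteq> 0" shows "orbit (rm x1 x2 x3 0 0 0) = orbVI"
proof (intro set_eqI iffI)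
  fix r assume "r \<in> orbit (rm x1 x2 x3 0 0 0)"
  then show "r \<in> orbVI" by (rule orbE') (auto simp: orbVI_def assms)
next
  fix r assume "r \<in> orbVI"
  then obtain z1 z2 z3 where z: "r = rm z1 z2 z3 0 0 0" "z3 \<noteq> 0" by (auto simp: orbVI_def)
  define a where "a = z3/x3"
  have a: "a \<noteq> 0" "a*x3 = z3" using z assms a_def by auto
  show "r \<in> orbit (rm x1 x2 x3 0 0 0)"
    by (rule orbI'[where a=a and c=1 and b=0 and d=0 and f="(z1 - a*a*x1)/(a*x3)" and g="(z2 - a*x2)/(a*x3)"])
       (use z assms a in \<open>auto simp: field_simps\<close>)
qed

lemma OVII: assumes "x6 \<noteq> 0" shows "orbit (rm 0 x2 0 x4 0 x6) = orbVII"
proof (intro set_eqI iffI)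
  fix r assume "r \<in> orbit (rm 0 x2 0 x4 0 x6)"
  then show "r \<in> orbVII" by (rule orbE') (auto simp: orbVII_def assms)
next
  fix r assume "r \<in> orbVII"
  then obtain z2 z4 z6 where z: "r = rm 0 z2 0 z4 0 z6" "z6 \<noteq> 0" by (auto simp: orbVII_def)
  define c where "c = z6/x6"
  have c: "c \<noteq> 0" "c*x6 = z6" using z assms c_def by auto
  show "r \<in> orbit (rm 0 x2 0 x4 0 x6)"
    by (rule orbI'[where a=1 and c=c and b=0 and d="(c*x2 - z2)/(c*x6)" and f="(c*x4 - z4)/(c*x6)" and g=0])
       (use z assms c in \<open>auto simp: field_simps\<close>)
qed

lemma OVIII: assumes "s*x1 > 0" "x6 \<noteq> 0" shows "orbit (rm x1 x2 0 x4 0 x6) = orbVIII s"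
proof (intro set_eqI iffI)
  fix r assume "r \<in> orbit (rm x1 x2 0 x4 0 x6)"
  then show "r \<in> orbVIII s" by (rule orbE') (auto simp: orbVIII_def sgn_pos assms)
next
  fix r assume "r \<in> orbVIII s"
  then obtain z1 z2 z4 z6 where z: "r = rm z1 z2 0 z4 0 z6" "s*z1 > 0" "z6 \<noteq> 0" by (auto simp: orbVIII_def)
  define a where "a = sqrt (z1/x1)"
  have a: "a \<noteq> 0" "a*a*x1 = z1" using sqrt_pick[OF assms(1) z(2)] a_def by auto
  define c where "c = z6/x6"
  have c: "c \<noteq> 0" "c*x6 = z6" using z assms c_def by auto
  show "r \<in> orbit (rm x1 x2 0 x4 0 x6)"
    by (rule orbI'[where a=a and c=c and b=0 and d="(a*c*x2 - z2)/(c*x6)" and f="(a*c*x4 - z4)/(c*x6)" and g=0])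
       (use z assms a c in \<open>auto simp: field_simps\<close>)
qed

lemma schouten_rm: "schouten2 (rm x1 x2 x3 x4 x5 x6) (rm x1 x2 x3 x4 x5 x6) =
  (\<lambda>i j k. (2*x3*x4 - 2*x2*x5 - 2*x4*x5) * wedge3 (ebas I1) (ebas I2) (ebas I3) i j k
         + (-2*x5*x5) * wedge3 (ebas I1) (ebas I2) (ebas I4) i j k
         + (2*x3*x6 - 2*x5*x6) * wedge3 (ebas I1) (ebas I3) (ebas I4) i j k
         + (2*x5*x6) * wedge3 (ebas I2) (ebas I3) (ebas I4) i j k)"
  unfolding schouten2_def schouten_dec_def br_ebas
  apply (rule ext)+
  subgoal for i j k
  by (cases i; cases j; cases k; simp add: sum_idx rm_def wedge2_def wedge3_def ebas_def sc_def; simp add: algebra_simps)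
  done

lemma inv3_zero: "inv3 = {(\<lambda>i j k. 0)}"
proof (intro set_eqI iffI)
  fix t :: ten3 assume "t \<in> {(\<lambda>i j k. 0)}"
  then show "t \<in> inv3" by (simp add: inv3_def alt3_def act3_def)
next
  fix t :: ten3 assume "t \<in> inv3"
  then have al: "alt3 t" and ac: "\<And>v. act3 v t = (\<lambda>i j k. 0)" by (auto simp: inv3_def)
  have A1: "\<And>i j k. t i j k = - t j i k" and A2: "\<And>i j k. t i j k = - t i k j"
    using al unfolding alt3_def by blast+
  have e4: "act3 (ebas I4) t i j k = 0" for i j k using ac by simp
  have e3: "act3 (ebas I3) t i j k = 0" for i j k using ac by simp
  note ex = act3_def br_ebas sum_idx sc_def
  have z1: "t I2 I2 I3 = 0" using A1[of I2 I2 I3] by linarith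
  have z2: "t I3 I3 I4 = 0" using A1[of I3 I3 I4] by linarith
  have z3: "t I2 I3 I3 = 0" using A2[of I2 I3 I3] by linarith
  have z4: "t I1 I3 I3 = 0" using A2[of I1 I3 I3] by linarith
  have z5: "t I4 I4 I3 = 0" using A1[of I4 I4 I3] by linarith
  have t123: "t I1 I2 I3 = 0" using e4[of I1 I2 I3] z1 by (simp add: ex)
  have t234: "t I2 I3 I4 = 0" using e4[of I2 I3 I4] z2 z3 by (simp add: ex)
  have t134: "t I1 I3 I4 = 0" using e4[of I1 I3 I4] t234 z2 z4 by (simp add: ex)
  have t124: "t I1 I2 I4 = 0" using e3[of I1 I2 I3] z5 A2[of I1 I2 I4] by (simp add: ex)
  have B1: "t i j k + t j i k = 0" for i j k using A1[of i j k] by linarith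
  have B2: "t i j k + t i k j = 0" for i j k using A2[of i j k] by linarith
  have G: "\<And>i j k. t i j k + t j i k = 0 \<Longrightarrow>
       t i j k + t i k j = 0 \<Longrightarrow>
       t j i k + t j k i = 0 \<Longrightarrow>
       t j i k + t i j k = 0 \<Longrightarrow>
       t i k j + t k i j = 0 \<Longrightarrow>
       t i k j + t i j k = 0 \<Longrightarrow>
       t j k i + t k j i = 0 \<Longrightarrow>
       t j k i + t j i k = 0 \<Longrightarrow>
       t k i j + t i k j = 0 \<Longrightarrow>
       t k i j + t k j i = 0 \<Longrightarrow>
       t k j i + t j k i = 0 \<Longrightarrow>
       t k j i + t k i j = 0 \<Longrightarrow>
       t I1 I2 I3 = 0 \<Longrightarrow> t I1 I2 I4 = 0 \<Longrightarrow> t I1 I3 I4 = 0 \<Longrightarrow> t I2 I3 I4 = 0 \<Longrightarrow> t i j k = 0"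
    apply (case_tac i; case_tac j; case_tac k)
    by (simp_all only:)
  have "t = (\<lambda>i j k. 0)"
  proof (intro ext)
    fix i j k
    show "t i j k = 0"
      by (rule G[OF B1[of i j k] B2[of i j k] B2[of j i k] B1[of j i k] B1[of i k j] B2[of i k j] B1[of j k i] B2[of j k i] B1[of k i j] B2[of k i j] B1[of k j i] B2[of k j i] t123 t124 t134 t234])
  qed
  then show "t \<in> {(\<lambda>i j k. 0)}" by simp
qed

lemma rm_e12: "rm t 0 0 0 0 0 = (\<lambda>i j. t * wedge2 (ebas I1) (ebas I2) i j)"
  by (simp add: rm_def)

lemma act2_delta: "act2 v r = delta r v" by (simp add: delta_def)

lemma inv2_char: "inv2 = {(\<lambda>i j. t * wedge2 (ebas I1) (ebas I2) i j) | t. True}"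
proof (intro set_eqI iffI)
  fix r assume "r \<in> inv2"
  then have al: "alt2 r" and ac: "\<And>v. act2 v r = (\<lambda>i j. 0)" by (auto simp: inv2_def)
  obtain y1 y2 y3 y4 y5 y6 where r: "r = rm y1 y2 y3 y4 y5 y6" using al alt2_iff by blast
  have "delta r (ebas I4) = rm 0 0 0 0 0 0" "delta r (ebas I3) = rm 0 0 0 0 0 0"
    using ac by (simp_all add: act2_delta rm_zero)
  then have "y2 = 0 \<and> y3 = 0 \<and> y4 = 0 \<and> y5 = 0 \<and> y6 = 0"
    unfolding r delta_rm ebas_mk4 by simp
  then have "r = rm y1 0 0 0 0 0" using r by simp
  then show "r \<in> {(\<lambda>i j. t * wedge2 (ebas I1) (ebas I2) i j) | t. True}" by (auto simp: rm_e12)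
next
  fix r assume "r \<in> {(\<lambda>i j. t * wedge2 (ebas I1) (ebas I2) i j) | t. True}"
  then obtain t where r: "r = rm t 0 0 0 0 0" by (auto simp: rm_e12)
  show "r \<in> inv2" unfolding inv2_def
    by (simp add: r alt2_rm act2_delta delta_rm rm_zero)
qed

lemma Ymat_CYBE: "Ymat = CYBE_sols"
  unfolding Ymat_def CYBE_sols_def inv3_zero by simp

lemma cybe_rm: "schouten2 (rm x1 x2 x3 x4 x5 x6) (rm x1 x2 x3 x4 x5 x6) = (\<lambda>i j k. 0) \<longleftrightarrow>
   x5 = 0 \<and> x3 * x4 = 0 \<and> x3 * x6 = 0"
proof
  assume h: "schouten2 (rm x1 x2 x3 x4 x5 x6) (rm x1 x2 x3 x4 x5 x6) = (\<lambda>i j k. 0)"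
  have "schouten2 (rm x1 x2 x3 x4 x5 x6) (rm x1 x2 x3 x4 x5 x6) I1 I2 I3 = 0"
       "schouten2 (rm x1 x2 x3 x4 x5 x6) (rm x1 x2 x3 x4 x5 x6) I1 I2 I4 = 0"
       "schouten2 (rm x1 x2 x3 x4 x5 x6) (rm x1 x2 x3 x4 x5 x6) I1 I3 I4 = 0" using h by simp_all
  then have e: "2*x3*x4 - 2*x2*x5 - 2*x4*x5 = 0" "-2*x5*x5 = 0" "2*x3*x6 - 2*x5*x6 = 0"
    unfolding schouten_rm by (simp_all add: wedge3_def ebas_def)
  then have "x5 = 0" by simp
  then show "x5 = 0 \<and> x3 * x4 = 0 \<and> x3 * x6 = 0" using e by simp
next
  assume "x5 = 0 \<and> x3 * x4 = 0 \<and> x3 * x6 = 0"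
  then show "schouten2 (rm x1 x2 x3 x4 x5 x6) (rm x1 x2 x3 x4 x5 x6) = (\<lambda>i j k. 0)"
    by (cases "x3 = 0") (auto simp: schouten_rm)
qed

lemma Ymat_char: "Ymat = {rm x1 x2 x3 x4 x5 x6 | x1 x2 x3 x4 x5 x6.
                   x5 = 0 \<and> x3 * x4 = 0 \<and> x3 * x6 = 0}"
  unfolding Ymat_CYBE CYBE_sols_def alt2_iff
  by (auto simp: cybe_rm)

lemma Ymat_mem: "rm x1 x2 x3 x4 x5 x6 \<in> Ymat \<longleftrightarrow> x5 = 0 \<and> x3 * x4 = 0 \<and> x3 * x6 = 0"
  unfolding Ymat_char by auto

lemma Ymat_cases:
  assumes "r \<in> Ymat"
  obtains (zero) "r = rm 0 0 0 0 0 0"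
  | (I) s x1 where "r = rm x1 0 0 0 0 0" "s*x1 > 0" "s = 1 \<or> s = -1"
  | (II) x2 where "r = rm 0 x2 0 0 0 0" "x2 \<noteq> 0"
  | (III) s x1 x2 where "r = rm x1 x2 0 0 0 0" "s*x1 > 0" "s = 1 \<or> s = -1" "x2 \<noteq> 0"
  | (IV) x2 x4 where "r = rm 0 x2 0 x4 0 0" "x4 \<noteq> 0"
  | (V) s x1 x2 x4 where "r = rm x1 x2 0 x4 0 0" "s*x1 > 0" "s = 1 \<or> s = -1" "x4 \<noteq> 0"
  | (VI) x1 x2 x3 where "r = rm x1 x2 x3 0 0 0" "x3 \<noteq> 0"
  | (VII) x2 x4 x6 where "r = rm 0 x2 0 x4 0 x6" "x6 \<noteq> 0"
  | (VIII) s x1 x2 x4 x6 where "r = rm x1 x2 0 x4 0 x6" "s*x1 > 0" "s = 1 \<or> s = -1" "x6 \<noteq> 0"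
proof -
  obtain x1 x2 x3 x4 x5 x6 where r: "r = rm x1 x2 x3 x4 x5 x6" and c: "x5 = 0" "x3 * x4 = 0" "x3 * x6 = 0"
    using assms unfolding Ymat_char by blast
  have sg: "x1 \<noteq> 0 \<Longrightarrow> \<exists>s. s*x1 > 0 \<and> (s = 1 \<or> s = -1)"
    by (cases "x1 > 0") (auto intro: exI[of _ 1] exI[of _ "-1"])
  show ?thesis
  proof (cases "x3 = 0")
    case False
    then have "x4 = 0" "x6 = 0" using c by auto
    show ?thesis by (rule VI[of x1 x2 x3]) (simp_all add: r c False \<open>x4 = 0\<close> \<open>x6 = 0\<close>)
  next
    case x3: True
    show ?thesis
    proof (cases "x6 = 0")
      case False
      show ?thesis
      proof (cases "x1 = 0")
        case True show ?thesis by (rule VII[of x2 x4 x6]) (simp_all add: r c x3 False True)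
      next
        case x1: False then obtain s where "s*x1 > 0" "s = 1 \<or> s = -1" using sg by blast
        then show ?thesis using False by (intro VIII[of x1 x2 x4 x6 s]) (simp_all add: r c x3)
      qed
    next
      case x6: True
      show ?thesis
      proof (cases "x4 = 0")
        case False
        show ?thesis
        proof (cases "x1 = 0")
          case True show ?thesis by (rule IV[of x2 x4]) (simp_all add: r c x3 x6 False True)
        next
          case x1: False then obtain s where "s*x1 > 0" "s = 1 \<or> s = -1" using sg by blast
          then show ?thesis using False by (intro V[of x1 x2 x4 s]) (simp_all add: r c x3 x6)
        qed
      next
        case x4: True
        show ?thesis
        proof (cases "x2 = 0")
          case False
          show ?thesis
          proof (cases "x1 = 0")
            case True show ?thesis by (rule II[of x2]) (simp_all add: r c x3 x6 x4 False True)
          next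
            case x1: False then obtain s where "s*x1 > 0" "s = 1 \<or> s = -1" using sg by blast
            then show ?thesis using False by (intro III[of x1 x2 s]) (simp_all add: r c x3 x6 x4)
          qed
        next
          case x2: True
          show ?thesis
          proof (cases "x1 = 0")
            case True show ?thesis by (rule zero) (simp add: r c x3 x6 x4 x2 True)
          next
            case x1: False then obtain s where "s*x1 > 0" "s = 1 \<or> s = -1" using sg by blast
            then show ?thesis by (intro I[of x1 s]) (simp_all add: r c x3 x6 x4 x2)
          qed
        qed
      qed
    qed
  qed
qed

definition Orbs :: "ten2 set set" where
  "Orbs = {{rm 0 0 0 0 0 0}, orbI 1, orbI (-1), orbII,
                         orbIII 1, orbIII (-1), orbIV, orbV 1, orbV (-1), orbVI,
                         orbVII, orbVIII 1, orbVIII (-1)}"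

lemma orbit_in_Orbs: assumes "r \<in> Ymat" shows "orbit r \<in> Orbs"
  using assms
proof (cases rule: Ymat_cases)
  case zero then show ?thesis by (simp add: O0 Orbs_def)
next
  case (I s x1) then have "orbit r = orbI s" using OI[of s x1] by simp
  then show ?thesis using I(3) by (elim disjE) (simp_all add: Orbs_def)
next
  case (II x2) then have "orbit r = orbII" using OII[of x2] by simp
  then show ?thesis by (simp add: Orbs_def)
next
  case (III s x1 x2) then have "orbit r = orbIII s" using OIII[of s x1 x2] by simp
  then show ?thesis using III(3) by (elim disjE) (simp_all add: Orbs_def)
next
  case (IV x2 x4) then have "orbit r = orbIV" using OIV[of x4 x2] by simp
  then show ?thesis by (simp add: Orbs_def)
next
  case (V s x1 x2 x4) then have "orbit r = orbV s" using OV[of s x1 x4 x2] by simp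
  then show ?thesis using V(3) by (elim disjE) (simp_all add: Orbs_def)
next
  case (VI x1 x2 x3) then have "orbit r = orbVI" using OVI[of x3 x1 x2] by simp
  then show ?thesis by (simp add: Orbs_def)
next
  case (VII x2 x4 x6) then have "orbit r = orbVII" using OVII[of x6 x2 x4] by simp
  then show ?thesis by (simp add: Orbs_def)
next
  case (VIII s x1 x2 x4 x6) then have "orbit r = orbVIII s" using OVIII[of s x1 x6 x2 x4] by simp
  then show ?thesis using VIII(3) by (elim disjE) (simp_all add: Orbs_def)
qed

lemma orbit_image: "orbit ` Ymat = Orbs"
proof
  show "orbit ` Ymat \<subseteq> Orbs" using orbit_in_Orbs by blast
next
  have m: "orbit (rm x1 x2 x3 x4 x5 x6) \<in> orbit ` Ymat" if "x5 = 0 \<and> x3 * x4 = 0 \<and> x3 * x6 = 0" for x1 x2 x3 x4 x5 x6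
    using Ymat_mem that by blast
  have a1: "{rm 0 0 0 0 0 0} \<in> orbit ` Ymat" by (rule image_eqI[where x="rm 0 0 0 0 0 0"]) (simp_all add: Ymat_mem O0)
  have a2: "orbI 1 \<in> orbit ` Ymat" by (rule image_eqI[where x="rm 1 0 0 0 0 0"]) (simp_all add: Ymat_mem OI[of 1 1])
  have a3: "orbI (-1) \<in> orbit ` Ymat" by (rule image_eqI[where x="rm (-1) 0 0 0 0 0"]) (simp_all add: Ymat_mem OI[of "-1" "-1"])
  have a4: "orbII \<in> orbit ` Ymat" by (rule image_eqI[where x="rm 0 1 0 0 0 0"]) (simp_all add: Ymat_mem OII[of 1])
  have a5: "orbIII 1 \<in> orbit ` Ymat" by (rule image_eqI[where x="rm 1 1 0 0 0 0"]) (simp_all add: Ymat_mem OIII[of 1 1 1])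
  have a6: "orbIII (-1) \<in> orbit ` Ymat" by (rule image_eqI[where x="rm (-1) 1 0 0 0 0"]) (simp_all add: Ymat_mem OIII[of "-1" "-1" 1])
  have a7: "orbIV \<in> orbit ` Ymat" by (rule image_eqI[where x="rm 0 0 0 1 0 0"]) (simp_all add: Ymat_mem OIV[of 1 0])
  have a8: "orbV 1 \<in> orbit ` Ymat" by (rule image_eqI[where x="rm 1 0 0 1 0 0"]) (simp_all add: Ymat_mem OV[of 1 1 1 0])
  have a9: "orbV (-1) \<in> orbit ` Ymat" by (rule image_eqI[where x="rm (-1) 0 0 1 0 0"]) (simp_all add: Ymat_mem OV[of "-1" "-1" 1 0])
  have a10: "orbVI \<in> orbit ` Ymat" by (rule image_eqI[where x="rm 0 0 1 0 0 0"]) (simp_all add: Ymat_mem OVI[of 1 0 0])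
  have a11: "orbVII \<in> orbit ` Ymat" by (rule image_eqI[where x="rm 0 0 0 0 0 1"]) (simp_all add: Ymat_mem OVII[of 1 0 0])
  have a12: "orbVIII 1 \<in> orbit ` Ymat" by (rule image_eqI[where x="rm 1 0 0 0 0 1"]) (simp_all add: Ymat_mem OVIII[of 1 1 1 0 0])
  have a13: "orbVIII (-1) \<in> orbit ` Ymat" by (rule image_eqI[where x="rm (-1) 0 0 0 0 1"]) (simp_all add: Ymat_mem OVIII[of "-1" "-1" 1 0 0])
  show "Orbs \<subseteq> orbit ` Ymat"
    unfolding Orbs_def using a1 a2 a3 a4 a5 a6 a7 a8 a9 a10 a11 a12 a13 by (simp only: insert_subset empty_subsetI simp_thms)
qed

lemma Orbs_sub: assumes "S \<in> Orbs" shows "S \<subseteq> Ymat"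
proof -
  have "{rm 0 0 0 0 0 0} \<subseteq> Ymat" "orbI s \<subseteq> Ymat" "orbII \<subseteq> Ymat" "orbIII s \<subseteq> Ymat"
     "orbIV \<subseteq> Ymat" "orbV s \<subseteq> Ymat" "orbVI \<subseteq> Ymat" "orbVII \<subseteq> Ymat" "orbVIII s \<subseteq> Ymat" for s
    by (auto simp: Ymat_mem orbI_def orbII_def orbIII_def orbIV_def orbV_def orbVI_def orbVII_def orbVIII_def)
  note F = this
  show ?thesis using assms unfolding Orbs_def
    apply (simp only: insert_iff empty_iff)
    apply (elim disjE)
    by (simp_all only: F simp_thms)
qed

lemma Ymat_Union: "Ymat = \<Union> Orbs"
proof
  show "\<Union> Orbs \<subseteq> Ymat" using Orbs_sub by blast
next
  show "Ymat \<subseteq> \<Union> Orbs"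
  proof
    fix r assume r: "r \<in> Ymat"
    then obtain x1 x2 x3 x4 x5 x6 where rx: "r = rm x1 x2 x3 x4 x5 x6" unfolding Ymat_char by blast
    have "r \<in> orbit r" unfolding rx by (rule orbI'[where a=1 and c=1 and b=0 and d=0 and f=0 and g=0]) simp_all
    then show "r \<in> \<Union> Orbs" using orbit_in_Orbs[OF r] by blast
  qed
qed

lemma all5: "(\<forall>k<(5::nat). P k) \<longleftrightarrow> P 0 \<and> P 1 \<and> P 2 \<and> P 3 \<and> P 4"
proof -
  have "{..<(5::nat)} = {0,1,2,3,4}" by auto
  then show ?thesis by (auto simp only: lessThan_iff[symmetric] insert_iff empty_iff)
qed

lemma delta_nat: assumes "a \<noteq> 0" "c \<noteq> 0"
  shows "delta (L2 (Tm a b c d f g) (rm x1 x2 x3 x4 x5 x6)) v =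
         L2 (Tm a b c d f g) (delta (rm x1 x2 x3 x4 x5 x6) (Ti a b c d f g v))"
  unfolding L2_Tm delta_rm L2_Tm rm_inj using assms
  by (simp add: Ti_def field_simps)

lemma delta_y1: "delta (rm y1 y2 y3 y4 y5 y6) = delta (rm z y2 y3 y4 y5 y6)"
  by (rule ext) (simp add: delta_rm)

lemma cequiv_rm: assumes "a \<noteq> 0" "c \<noteq> 0" "L2 (Tm a b c d f g) (rm x1 x2 x3 x4 x5 x6) = rm z y2 y3 y4 y5 y6"
  shows "cequiv (delta (rm x1 x2 x3 x4 x5 x6)) (delta (rm y1 y2 y3 y4 y5 y6))"
  unfolding cequiv_def
proof (rule bexI[OF _ Tm_Aut[OF assms(1,2)]])
  show "delta (rm y1 y2 y3 y4 y5 y6) = (\<lambda>v. L2 (Tm a b c d f g) (delta (rm x1 x2 x3 x4 x5 x6) (inv (Tm a b c d f g) v)))"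
  proof
    fix v
    have "delta (rm y1 y2 y3 y4 y5 y6) v = delta (rm z y2 y3 y4 y5 y6) v" by (simp add: delta_y1[of y1 _ _ _ _ _ z])
    also have "\<dots> = delta (L2 (Tm a b c d f g) (rm x1 x2 x3 x4 x5 x6)) v" by (simp only: assms(3))
    also have "\<dots> = L2 (Tm a b c d f g) (delta (rm x1 x2 x3 x4 x5 x6) (inv (Tm a b c d f g) v))"
      by (simp only: delta_nat[OF assms(1,2)] inv_Tm[OF assms(1,2)])
    finally show "delta (rm y1 y2 y3 y4 y5 y6) v = L2 (Tm a b c d f g) (delta (rm x1 x2 x3 x4 x5 x6) (inv (Tm a b c d f g) v))" .
  qed
qed

lemma cequivD: assumes "cequiv (delta (rm x1 x2 x3 x4 x5 x6)) (delta (rm y1 y2 y3 y4 y5 y6))"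
  obtains a b c d f g where "a \<noteq> 0" "c \<noteq> 0"
    "\<And>w. delta (rm y1 y2 y3 y4 y5 y6) (Tm a b c d f g w) = L2 (Tm a b c d f g) (delta (rm x1 x2 x3 x4 x5 x6) w)"
proof -
  obtain T where T: "T \<in> Aut" and e: "delta (rm y1 y2 y3 y4 y5 y6) = (\<lambda>v. L2 T (delta (rm x1 x2 x3 x4 x5 x6) (inv T v)))"
    using assms unfolding cequiv_def by blast
  obtain a b c d f g where p: "a \<noteq> 0" "c \<noteq> 0" "T = Tm a b c d f g" using Aut_Tm[OF T] by blast
  have W: "delta (rm y1 y2 y3 y4 y5 y6) (Tm a b c d f g w) = L2 (Tm a b c d f g) (delta (rm x1 x2 x3 x4 x5 x6) w)" for w
    using e p by (simp add: inv_Tm Ti_Tm)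
  show ?thesis by (rule that[OF p(1) p(2) W])
qed

lemma not_cequiv: assumes "\<And>a b c d f g. a \<noteq> 0 \<Longrightarrow> c \<noteq> 0 \<Longrightarrow>
     delta (rm y1 y2 y3 y4 y5 y6) (Tm a b c d f g (mk4 0 0 0 1)) \<noteq> L2 (Tm a b c d f g) (delta (rm x1 x2 x3 x4 x5 x6) (mk4 0 0 0 1))
   \<or> delta (rm y1 y2 y3 y4 y5 y6) (Tm a b c d f g (mk4 0 0 1 0)) \<noteq> L2 (Tm a b c d f g) (delta (rm x1 x2 x3 x4 x5 x6) (mk4 0 0 1 0))"
  shows "\<not> cequiv (delta (rm x1 x2 x3 x4 x5 x6)) (delta (rm y1 y2 y3 y4 y5 y6))"
proof
  assume "cequiv (delta (rm x1 x2 x3 x4 x5 x6)) (delta (rm y1 y2 y3 y4 y5 y6))"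
  then show False
  proof (rule cequivD)
    fix a c b d f g assume a: "a \<noteq> 0" and c: "c \<noteq> 0" and
      W: "\<And>w. delta (rm y1 y2 y3 y4 y5 y6) (Tm a b c d f g w) = L2 (Tm a b c d f g) (delta (rm x1 x2 x3 x4 x5 x6) w)"
    show False using assms[OF a c] W by blast
  qed
qed

lemma cls1: assumes "r \<in> {rm 0 0 0 0 0 0} \<union> orbI 1 \<union> orbI (-1)" obtains y1 where "r = rm y1 0 0 0 0 0"
  using assms by (auto simp: orbI_def)
lemma cls2: assumes "r \<in> orbII \<union> orbIII 1 \<union> orbIII (-1)" obtains y1 y2 where "r = rm y1 y2 0 0 0 0" "y2 \<noteq> 0"
  using assms by (auto simp: orbII_def orbIII_def)
lemma cls3: assumes "r \<in> orbIV \<union> orbV 1 \<union> orbV (-1)" obtains y1 y2 y4 where "r = rm y1 y2 0 y4 0 0" "y4 \<noteq> 0"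
  using assms by (auto simp: orbIV_def orbV_def)
lemma cls4: assumes "r \<in> orbVI" obtains y1 y2 y3 where "r = rm y1 y2 y3 0 0 0" "y3 \<noteq> 0"
  using assms by (auto simp: orbVI_def)
lemma cls5: assumes "r \<in> orbVII \<union> orbVIII 1 \<union> orbVIII (-1)" obtains y1 y2 y4 y6 where "r = rm y1 y2 0 y4 0 y6" "y6 \<noteq> 0"
  using assms by (auto simp: orbVII_def orbVIII_def)

lemma D1: "r \<in> {rm 0 0 0 0 0 0} \<union> orbI 1 \<union> orbI (-1) \<Longrightarrow> delta r = (\<lambda>v i j. 0)"
  by (erule cls1) (rule ext, simp add: delta_rm rm_zero)

lemma E1: "r \<in> {rm 0 0 0 0 0 0} \<union> orbI 1 \<union> orbI (-1) \<Longrightarrow> cequiv (delta (rm 0 0 0 0 0 0)) (delta r)"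
  apply (erule cls1)
  apply simp
  by (rule cequiv_rm[where a=1 and c=1 and b=0 and d=0 and f=0 and g=0 and z=0]) (simp_all add: L2_Tm)

lemma E2: "r \<in> orbII \<union> orbIII 1 \<union> orbIII (-1) \<Longrightarrow> cequiv (delta (rm 0 1 0 0 0 0)) (delta r)"
  apply (erule cls2)
  apply simp
  subgoal for y1 y2
  by (rule cequiv_rm[where a=1 and c=y2 and b=0 and d=0 and f=0 and g=0 and z=0]) (simp_all add: L2_Tm)
  done

lemma E3: "r \<in> orbIV \<union> orbV 1 \<union> orbV (-1) \<Longrightarrow> cequiv (delta (rm 0 0 0 1 0 0)) (delta r)"
  apply (erule cls3)
  apply simp
  subgoal for y1 y2 y4
  by (rule cequiv_rm[where a=1 and c=y4 and b="y2/y4" and d=0 and f=0 and g=0 and z=0]) (simp_all add: L2_Tm)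
  done

lemma E4: "r \<in> orbVI \<Longrightarrow> cequiv (delta (rm 0 0 1 0 0 0)) (delta r)"
  apply (erule cls4)
  apply simp
  subgoal for y1 y2 y3
  by (rule cequiv_rm[where a=y3 and c=1 and b=0 and d=0 and f=0 and g="y2/y3" and z=0]) (simp_all add: L2_Tm)
  done

lemma E5: "r \<in> orbVII \<union> orbVIII 1 \<union> orbVIII (-1) \<Longrightarrow> cequiv (delta (rm 0 0 0 0 0 1)) (delta r)"
  apply (erule cls5)
  apply simp
  subgoal for y1 y2 y4 y6
  by (rule cequiv_rm[where a=1 and c=y6 and b=0 and d="-y2/y6" and f="-y4/y6" and g=0 and z=0]) (simp_all add: L2_Tm)
  done

lemmas NCs = not_cequiv[of 0 0 0 0 0 0 0 1 0 0 0 0] not_cequiv[of 0 0 0 0 0 0 0 0 0 1 0 0]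
  not_cequiv[of 0 0 0 0 0 0 0 0 1 0 0 0] not_cequiv[of 0 0 0 0 0 0 0 0 0 0 0 1]
  not_cequiv[of 0 1 0 0 0 0 0 0 0 0 0 0] not_cequiv[of 0 1 0 0 0 0 0 0 0 1 0 0]
  not_cequiv[of 0 1 0 0 0 0 0 0 1 0 0 0] not_cequiv[of 0 1 0 0 0 0 0 0 0 0 0 1]
  not_cequiv[of 0 0 0 1 0 0 0 0 0 0 0 0] not_cequiv[of 0 0 0 1 0 0 0 1 0 0 0 0]
  not_cequiv[of 0 0 0 1 0 0 0 0 1 0 0 0] not_cequiv[of 0 0 0 1 0 0 0 0 0 0 0 1]
  not_cequiv[of 0 0 1 0 0 0 0 0 0 0 0 0] not_cequiv[of 0 0 1 0 0 0 0 1 0 0 0 0]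
  not_cequiv[of 0 0 1 0 0 0 0 0 0 1 0 0] not_cequiv[of 0 0 1 0 0 0 0 0 0 0 0 1]
  not_cequiv[of 0 0 0 0 0 1 0 0 0 0 0 0] not_cequiv[of 0 0 0 0 0 1 0 1 0 0 0 0]
  not_cequiv[of 0 0 0 0 0 1 0 0 0 1 0 0] not_cequiv[of 0 0 0 0 0 1 0 0 1 0 0 0]

lemma NC_all:
  "\<not> cequiv (delta (rm 0 0 0 0 0 0)) (delta (rm 0 1 0 0 0 0))"
  "\<not> cequiv (delta (rm 0 0 0 0 0 0)) (delta (rm 0 0 0 1 0 0))"
  "\<not> cequiv (delta (rm 0 0 0 0 0 0)) (delta (rm 0 0 1 0 0 0))"
  "\<not> cequiv (delta (rm 0 0 0 0 0 0)) (delta (rm 0 0 0 0 0 1))"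
  "\<not> cequiv (delta (rm 0 1 0 0 0 0)) (delta (rm 0 0 0 0 0 0))"
  "\<not> cequiv (delta (rm 0 1 0 0 0 0)) (delta (rm 0 0 0 1 0 0))"
  "\<not> cequiv (delta (rm 0 1 0 0 0 0)) (delta (rm 0 0 1 0 0 0))"
  "\<not> cequiv (delta (rm 0 1 0 0 0 0)) (delta (rm 0 0 0 0 0 1))"
  "\<not> cequiv (delta (rm 0 0 0 1 0 0)) (delta (rm 0 0 0 0 0 0))"
  "\<not> cequiv (delta (rm 0 0 0 1 0 0)) (delta (rm 0 1 0 0 0 0))"
  "\<not> cequiv (delta (rm 0 0 0 1 0 0)) (delta (rm 0 0 1 0 0 0))"
  "\<not> cequiv (delta (rm 0 0 0 1 0 0)) (delta (rm 0 0 0 0 0 1))"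
  "\<not> cequiv (delta (rm 0 0 1 0 0 0)) (delta (rm 0 0 0 0 0 0))"
  "\<not> cequiv (delta (rm 0 0 1 0 0 0)) (delta (rm 0 1 0 0 0 0))"
  "\<not> cequiv (delta (rm 0 0 1 0 0 0)) (delta (rm 0 0 0 1 0 0))"
  "\<not> cequiv (delta (rm 0 0 1 0 0 0)) (delta (rm 0 0 0 0 0 1))"
  "\<not> cequiv (delta (rm 0 0 0 0 0 1)) (delta (rm 0 0 0 0 0 0))"
  "\<not> cequiv (delta (rm 0 0 0 0 0 1)) (delta (rm 0 1 0 0 0 0))"
  "\<not> cequiv (delta (rm 0 0 0 0 0 1)) (delta (rm 0 0 0 1 0 0))"
  "\<not> cequiv (delta (rm 0 0 0 0 0 1)) (delta (rm 0 0 1 0 0 0))"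
  by (rule NCs; simp add: delta_rm L2_Tm Tm_def)+

theorem mainTheorem13:
  shows "(inv3 = {(\<lambda>i j k. 0)}) \<and>
    (inv2 = {(\<lambda>i j. t * wedge2 (ebas I1) (ebas I2) i j) | t. True}) \<and>
    (Ymat = CYBE_sols) \<and>
    (Ymat = {rm x1 x2 x3 x4 x5 x6 | x1 x2 x3 x4 x5 x6.
                   x5 = 0 \<and> x3 * x4 = 0 \<and> x3 * x6 = 0}) \<and>
    (orbit ` Ymat = {{rm 0 0 0 0 0 0}, orbI 1, orbI (-1), orbII,
                         orbIII 1, orbIII (-1), orbIV, orbV 1, orbV (-1), orbVI,
                         orbVII, orbVIII 1, orbVIII (-1)}) \<and>
    ((\<forall>r \<in> {rm 0 0 0 0 0 0} \<union> orbI 1 \<union> orbI (-1). delta r = (\<lambda>v i j. 0))) \<and>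
    (let reps = [rm 0 0 0 0 0 0, rm 0 1 0 0 0 0, rm 0 0 0 1 0 0,
                     rm 0 0 1 0 0 0, rm 0 0 0 0 0 1];
             cls = [{rm 0 0 0 0 0 0} \<union> orbI 1 \<union> orbI (-1),
                    orbII \<union> orbIII 1 \<union> orbIII (-1),
                    orbIV \<union> orbV 1 \<union> orbV (-1),
                    orbVI,
                    orbVII \<union> orbVIII 1 \<union> orbVIII (-1)]
         in Ymat = \<Union>(set cls)
            \<and> (\<forall>k<5. reps ! k \<in> cls ! k
                   \<and> (\<forall>r \<in> cls ! k. cequiv (delta (reps ! k)) (delta r)))
            \<and> (\<forall>k<5. \<forall>l<5. k \<noteq> l \<longrightarrow> \<not> cequiv (delta (reps ! k)) (delta (reps ! l))))"

proof -
  have U: "Ymat = \<Union> (set [{rm 0 0 0 0 0 0} \<union> orbI 1 \<union> orbI (-1),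
                    orbII \<union> orbIII 1 \<union> orbIII (-1),
                    orbIV \<union> orbV 1 \<union> orbV (-1),
                    orbVI,
                    orbVII \<union> orbVIII 1 \<union> orbVIII (-1)])"
    unfolding Ymat_Union Orbs_def by auto
  have R: "rm 0 0 0 0 0 0 \<in> {rm 0 0 0 0 0 0} \<union> orbI 1 \<union> orbI (-1)"
    "rm 0 1 0 0 0 0 \<in> orbII \<union> orbIII 1 \<union> orbIII (-1)"
    "rm 0 0 0 1 0 0 \<in> orbIV \<union> orbV 1 \<union> orbV (-1)"
    "rm 0 0 1 0 0 0 \<in> orbVI"
    "rm 0 0 0 0 0 1 \<in> orbVII \<union> orbVIII 1 \<union> orbVIII (-1)"
    by (auto simp: orbII_def orbIV_def orbVI_def orbVII_def)
  show ?thesis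
    unfolding Let_def
    apply (intro conjI)
    apply (rule inv3_zero)
    apply (rule inv2_char)
    apply (rule Ymat_CYBE)
    apply (rule Ymat_char)
    apply (rule orbit_image[unfolded Orbs_def])
    apply (blast intro: D1)
    apply (rule U)
    apply (simp only: all5 nth_Cons_0 nth_Cons_numeral numeral_One nth_Cons_Suc)
    using R E1 E2 E3 E4 E5 apply (simp add: numeral_eq_Suc)
    apply (simp only: all5)
    using NC_all apply (simp add: numeral_eq_Suc)
    done
qed

end
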